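(* Let $f:\mathbb{R}^n\to(-\infty,\infty]$, $g:\mathbb{R}^m\to(-\infty,\infty]$ be closed proper convex, $A\in\mathbb{R}^{m\times n}$, and let $\tau,\sigma>0$, $x^0\in\mathbb{R}^n$, $u^0\in\mathbb{R}^m$, $y^0\in\mathbb{R}^m$ be given with $u^0=Ax^0$. Algorithm CP-$xy\bar y$: set $\bar y^0=y^0$ and for $k\ge0$ compute $x^{k+1}=\mathrm{prox}^f_\tau(x^k-\tau A^\top\bar y^k)$, $y^{k+1}=\mathrm{prox}^{g^*}_\sigma(y^k+\sigma Ax^{k+1})$, $\bar y^{k+1}=2y^{k+1}-y^k$. Algorithm LADMP-$xuy$: for $k\ge0$ compute $x^{k+1}=\mathrm{prox}^f_\tau\big(x^k-\tau\nabla_x\mathcal{Q}^\sigma_P(x^k,u^k,y^k)\big)$, $u^{k+1}=\mathrm{prox}^g_{\sigma^{-1}}(\sigma^{-1}y^k+Ax^{k+1})$, $y^{k+1}=y^k-\sigma(u^{k+1}-Ax^{k+1})$. Then, started from the same $(x^0,y^0)$, both algorithms generate exactly the same sequence $\{(x^k,y^k)\}_{k\ge1}$.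
   Context: For a closed proper convex $h:\mathbb{R}^d\to(-\infty,\infty]$ and $\gamma>0$, $\mathrm{prox}^h_\gamma(x):=\arg\min_z\{h(z)+\frac{1}{2\gamma}\|z-x\|^2\}$. The conjugate is $h^*(x)=\sup_z\{\langle x,z\rangle-h(z)\}$. For $x\in\mathbb{R}^n$, $u,y\in\mathbb{R}^m$, $\mathcal{Q}^\sigma_P(x,u,y):=\frac{\sigma}{2}\|u-Ax-\sigma^{-1}y\|^2-\frac{1}{2\sigma}\|y\|^2$, so $\nabla_x\mathcal{Q}^\sigma_P(x,u,y)=-\sigma A^\top(u-Ax-\sigma^{-1}y)$. *)

theory Defs
  imports "HOL-Analysis.Analysis"
begin

definition proper_fun :: "('a::real_vector \<Rightarrow> ereal) \<Rightarrow> bool" where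
  "proper_fun h \<longleftrightarrow> (\<forall>x. h x \<noteq> -\<infinity>) \<and> (\<exists>x. h x \<noteq> \<infinity>)"

definition closed_fun :: "('a::real_normed_vector \<Rightarrow> ereal) \<Rightarrow> bool" where
  "closed_fun h \<longleftrightarrow> closed {(x, t::real). h x \<le> ereal t}"

definition convex_fun :: "('a::real_vector \<Rightarrow> ereal) \<Rightarrow> bool" where
  "convex_fun h \<longleftrightarrow> convex {(x, t::real). h x \<le> ereal t}"

definition closed_proper_convex :: "('a::real_normed_vector \<Rightarrow> ereal) \<Rightarrow> bool" where
  "closed_proper_convex h \<longleftrightarrow> closed_fun h \<and> proper_fun h \<and> convex_fun h"

definition prox :: "('a::real_normed_vector \<Rightarrow> ereal) \<Rightarrow> real \<Rightarrow> 'a \<Rightarrow> 'a" where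
  "prox h \<gamma> x = (THE z. \<forall>w. h z + ereal (norm (z - x)^2 / (2*\<gamma>))
                              \<le> h w + ereal (norm (w - x)^2 / (2*\<gamma>)))"

definition conj_fun :: "('a::real_inner \<Rightarrow> ereal) \<Rightarrow> 'a \<Rightarrow> ereal" where
  "conj_fun h x = (SUP z. ereal (x \<bullet> z) - h z)"

text \<open>Gradient in x of Q^sigma_P(x,u,y) = sigma/2 ||u - Ax - y/sigma||^2 - ||y||^2/(2 sigma),
  namely -sigma A^T (u - A x - y/sigma).\<close>
definition gradx_QP :: "real^'n^'m \<Rightarrow> real \<Rightarrow> real^'n \<Rightarrow> real^'m \<Rightarrow> real^'m \<Rightarrow> real^'n" where
  "gradx_QP A \<sigma> x u y = - \<sigma> *\<^sub>R (transpose A *v (u - A *v x - (1/\<sigma>) *\<^sub>R y))"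

primrec cp_xyy :: "(real^'n \<Rightarrow> ereal) \<Rightarrow> (real^'m \<Rightarrow> ereal) \<Rightarrow> real^'n^'m \<Rightarrow> real \<Rightarrow> real
    \<Rightarrow> real^'n \<Rightarrow> real^'m \<Rightarrow> nat \<Rightarrow> (real^'n) \<times> (real^'m) \<times> (real^'m)" where
  "cp_xyy f g A \<tau> \<sigma> x0 y0 0 = (x0, y0, y0)"
| "cp_xyy f g A \<tau> \<sigma> x0 y0 (Suc k) =
     (let (x, y, yb) = cp_xyy f g A \<tau> \<sigma> x0 y0 k;
          x' = prox f \<tau> (x - \<tau> *\<^sub>R (transpose A *v yb));
          y' = prox (conj_fun g) \<sigma> (y + \<sigma> *\<^sub>R (A *v x'))
      in (x', y', 2 *\<^sub>R y' - y))"

primrec ladmp_xuy :: "(real^'n \<Rightarrow> ereal) \<Rightarrow> (real^'m \<Rightarrow> ereal) \<Rightarrow> real^'n^'m \<Rightarrow> real \<Rightarrow> real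
    \<Rightarrow> real^'n \<Rightarrow> real^'m \<Rightarrow> real^'m \<Rightarrow> nat \<Rightarrow> (real^'n) \<times> (real^'m) \<times> (real^'m)" where
  "ladmp_xuy f g A \<tau> \<sigma> x0 u0 y0 0 = (x0, u0, y0)"
| "ladmp_xuy f g A \<tau> \<sigma> x0 u0 y0 (Suc k) =
     (let (x, u, y) = ladmp_xuy f g A \<tau> \<sigma> x0 u0 y0 k;
          x' = prox f \<tau> (x - \<tau> *\<^sub>R gradx_QP A \<sigma> x u y);
          u' = prox g (1/\<sigma>) ((1/\<sigma>) *\<^sub>R y + A *v x');
          y' = y - \<sigma> *\<^sub>R (u' - A *v x')
      in (x', u', y'))"

end

theory Submission
  imports Defs
begin

lemma eps_le:
  fixes a b c :: real
  assumes "\<And>t. 0 < t \<Longrightarrow> t \<le> 1 \<Longrightarrow> a \<le> b + t * c" and "c \<ge> 0"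
  shows "a \<le> b"
proof (rule ccontr)
  assume "\<not> a \<le> b"
  define t where "t = min 1 ((a - b) / (2 * (c + 1)))"
  have t0: "0 < t" "t \<le> 1" using \<open>\<not> a \<le> b\<close> \<open>c\<ge>0\<close> by (auto simp: t_def)
  have "t * c \<le> (a - b) / (2 * (c + 1)) * c" using t0 \<open>c\<ge>0\<close>
    by (intro mult_right_mono) (auto simp: t_def)
  also have "\<dots> < a - b"
  proof -
    have "(a - b) * (c + 2) > 0" using \<open>\<not> a \<le> b\<close> \<open>c\<ge>0\<close> by simp
    then show ?thesis using \<open>c\<ge>0\<close> by (simp add: field_simps)
  qed
  finally show False using assms(1)[OF t0] by simp
qed

lemma convex_fun_ineq:
  assumes "convex_fun g" "g a = ereal ra" "g b = ereal rb" "0 \<le> t" "t \<le> 1"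
  shows "g ((1 - t) *\<^sub>R a + t *\<^sub>R b) \<le> ereal ((1 - t) * ra + t * rb)"
proof -
  have "(a, ra) \<in> {(x, t). g x \<le> ereal t}" "(b, rb) \<in> {(x, t). g x \<le> ereal t}"
    using assms by auto
  from convexD[OF assms(1)[unfolded convex_fun_def] this, of "1 - t" t]
  show ?thesis using assms by auto
qed

lemma norm_expand:
  fixes u d :: "'a::real_inner"
  shows "norm (u + t *\<^sub>R d)^2 = norm u ^2 + 2 * t * inner u d + t^2 * norm d ^2"
  unfolding power2_norm_eq_inner by (simp add: inner_add_left inner_add_right inner_commute algebra_simps power2_eq_square)

lemma min_subgrad:
  fixes g :: "'a::real_inner \<Rightarrow> ereal"
  assumes cv: "convex_fun g" and pr: "proper_fun g" and ga: "\<gamma> > 0"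
    and mn: "\<forall>w. g p + ereal (norm (p - x)^2 / (2*\<gamma>)) \<le> g w + ereal (norm (w - x)^2 / (2*\<gamma>))"
  obtains r where "g p = ereal r" "\<forall>z. ereal (r + inner (x - p) (z - p) / \<gamma>) \<le> g z"
proof -
  obtain z0 where z0: "g z0 \<noteq> \<infinity>" using pr unfolding proper_fun_def by auto
  have "g z0 \<noteq> -\<infinity>" using pr unfolding proper_fun_def by auto
  then obtain r0 where r0: "g z0 = ereal r0" using z0 by (cases "g z0") auto
  have "g p + ereal (norm (p - x)^2 / (2*\<gamma>)) \<le> ereal (r0 + norm (z0 - x)^2 / (2*\<gamma>))"
    using mn[rule_format, of z0] r0 by simp
  then have "g p \<noteq> \<infinity>" by auto
  moreover have "g p \<noteq> -\<infinity>" using pr unfolding proper_fun_def by auto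
  ultimately obtain r where r: "g p = ereal r" by (cases "g p") auto
  have "ereal (r + inner (x - p) (z - p) / \<gamma>) \<le> g z" for z
  proof (cases "g z")
    case PInf then show ?thesis by simp
  next
    case MInf then show ?thesis using pr unfolding proper_fun_def by auto
  next
    case (real s)
    define d where "d = z - p"
    have "r \<le> (s + inner (p - x) d / \<gamma>) + t * (norm d ^2 / (2*\<gamma>))" if t: "0 < t" "t \<le> 1" for t
    proof -
      have zt: "(1 - t) *\<^sub>R p + t *\<^sub>R z - x = (p - x) + t *\<^sub>R d"
        by (simp add: d_def algebra_simps)
      have c1: "g ((1 - t) *\<^sub>R p + t *\<^sub>R z) \<le> ereal ((1 - t) * r + t * s)"
        using convex_fun_ineq[OF cv r real] t by simp
      have "ereal (r + norm (p - x)^2 / (2*\<gamma>)) \<le> g ((1 - t) *\<^sub>R p + t *\<^sub>R z) + ereal (norm ((1 - t) *\<^sub>R p + t *\<^sub>R z - x)^2 / (2*\<gamma>))"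
        using mn[rule_format, of "(1 - t) *\<^sub>R p + t *\<^sub>R z"] r by simp
      also have "\<dots> \<le> ereal ((1 - t) * r + t * s) + ereal (norm ((1 - t) *\<^sub>R p + t *\<^sub>R z - x)^2 / (2*\<gamma>))"
        using c1 by (rule add_right_mono)
      finally have "r + norm (p - x)^2 / (2*\<gamma>) \<le> (1 - t) * r + t * s + norm ((1 - t) *\<^sub>R p + t *\<^sub>R z - x)^2 / (2*\<gamma>)"
        by simp
      then have "r + norm (p - x)^2 / (2*\<gamma>) \<le> (1 - t) * r + t * s + norm ((p - x) + t *\<^sub>R d)^2 / (2*\<gamma>)"
        by (simp only: zt)
      then have "r + norm (p - x)^2 / (2*\<gamma>) \<le> (1 - t) * r + t * s + (norm (p - x) ^2 + 2 * t * inner (p - x) d + t^2 * norm d ^2) / (2*\<gamma>)"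
        by (simp add: norm_expand)
      note H = this
      have "t * r \<le> t * s + t * (inner (p - x) d / \<gamma>) + t * (t * (norm d ^2 / (2*\<gamma>)))"
      proof -
        have e: "(norm (p - x) ^2 + 2 * t * inner (p - x) d + t^2 * norm d ^2) / (2*\<gamma>)
            = norm (p - x) ^2 / (2*\<gamma>) + t * (inner (p - x) d / \<gamma>) + t * (t * (norm d ^2 / (2*\<gamma>)))"
          using ga by (simp add: field_simps power2_eq_square)
        show ?thesis using H[unfolded e] by (simp add: algebra_simps)
      qed
      then have "t * r \<le> t * ((s + inner (p - x) d / \<gamma>) + t * (norm d ^2 / (2*\<gamma>)))"
        by (simp add: algebra_simps)
      then show ?thesis using t by simp
    qed
    then have "r \<le> s + inner (p - x) d / \<gamma>"
      by (rule eps_le) (use ga in \<open>auto intro: divide_nonneg_pos\<close>)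
    moreover have "inner (x - p) d / \<gamma> = - (inner (p - x) d / \<gamma>)"
      by (simp add: inner_diff_left diff_divide_distrib)
    ultimately have "r + inner (x - p) d / \<gamma> \<le> s" by linarith
    then show ?thesis using real d_def by simp
  qed
  then show ?thesis using that r by blast
qed

lemma the_min_unique:
  fixes F :: "'a::real_normed_vector \<Rightarrow> ereal"
  assumes mn: "\<forall>w. F q \<le> F w" and fq: "F q = ereal m"
    and st: "\<forall>z. ereal (m + norm (z - q)^2 * c) \<le> F z" and c: "c > 0"
  shows "(THE z. \<forall>w. F z \<le> F w) = q"
proof (rule the_equality)
  show "\<forall>w. F q \<le> F w" by (rule mn)
next
  fix z assume "\<forall>w. F z \<le> F w"
  then have "F z \<le> F q" by simp
  with st fq have "m + norm (z - q)^2 * c \<le> m" by (metis ereal_less_eq(3) order_trans)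
  then have "norm (z - q)^2 * c \<le> 0" by simp
  then have "norm (z - q)^2 \<le> 0" using c by (simp add: mult_le_0_iff)
  then show "z = q" by simp
qed

lemma prox_eq:
  fixes g :: "'a::real_inner \<Rightarrow> ereal"
  assumes cv: "convex_fun g" and pr: "proper_fun g" and ga: "\<gamma> > 0"
    and mn: "\<forall>w. g p + ereal (norm (p - x)^2 / (2*\<gamma>)) \<le> g w + ereal (norm (w - x)^2 / (2*\<gamma>))"
  shows "prox g \<gamma> x = p"
proof -
  obtain r where r: "g p = ereal r" and sg: "\<forall>z. ereal (r + inner (x - p) (z - p) / \<gamma>) \<le> g z"
    using min_subgrad[OF cv pr ga mn] by blast
  have st: "ereal (r + norm (p - x)^2 / (2*\<gamma>) + norm (z - p)^2 * (1 / (2*\<gamma>))) \<le> g z + ereal (norm (z - x)^2 / (2*\<gamma>))" for z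
  proof -
    have e: "norm (z - x)^2 = norm (z - p)^2 + 2 * inner (z - p) (p - x) + norm (p - x)^2"
      using norm_expand[of "z - p" 1 "p - x"] by (simp add: algebra_simps)
    have e2: "r + inner (x - p) (z - p) / \<gamma> + norm (z - x)^2 / (2*\<gamma>) = r + norm (p - x)^2 / (2*\<gamma>) + norm (z - p)^2 * (1 / (2*\<gamma>))"
      unfolding e using ga by (simp add: field_simps inner_diff_left inner_diff_right inner_commute)
    have "ereal (r + inner (x - p) (z - p) / \<gamma>) + ereal (norm (z - x)^2 / (2*\<gamma>)) \<le> g z + ereal (norm (z - x)^2 / (2*\<gamma>))"
      using sg by (intro add_right_mono) auto
    then show ?thesis using e2 by simp
  qed
  show ?thesis unfolding prox_def
    by (rule the_min_unique[where m = "r + norm (p - x)^2 / (2*\<gamma>)" and c = "1 / (2*\<gamma>)"])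
       (use mn r st ga in auto)
qed

lemma quad_bound:
  fixes \<alpha> cc D K :: real
  assumes "\<alpha> > 0" "cc \<ge> 0" "D \<ge> 0" "\<alpha> * D^2 \<le> K + cc * D"
  shows "D \<le> 1 + 2 * cc / \<alpha> + 2 * \<bar>K\<bar> / \<alpha>"
proof (rule ccontr)
  assume H: "\<not> ?thesis"
  have p1: "2 * cc / \<alpha> \<ge> 0" "2 * \<bar>K\<bar> / \<alpha> \<ge> 0" using assms by auto
  then have D1: "D \<ge> 1" and D2: "D \<ge> 2 * cc / \<alpha>" and D3: "D > 2 * \<bar>K\<bar> / \<alpha>" using H by linarith+
  from D2 have "cc \<le> \<alpha> * D / 2" using assms(1) by (simp add: field_simps)
  then have "cc * D \<le> \<alpha> * D / 2 * D" using assms(3) by (rule mult_right_mono)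
  with assms(4) have "\<alpha> * D^2 / 2 \<le> K" by (simp add: power2_eq_square algebra_simps)
  moreover have "\<alpha> * D \<le> \<alpha> * D^2" using D1 assms(1)
    by (simp add: power2_eq_square)
  ultimately have "\<alpha> * D \<le> 2 * \<bar>K\<bar>" by linarith
  then have "D \<le> 2 * \<bar>K\<bar> / \<alpha>" using assms(1) by (simp add: field_simps)
  with D3 show False by linarith
qed

lemma affine_minorant:
  fixes g :: "'a::euclidean_space \<Rightarrow> ereal"
  assumes "closed_proper_convex g"
  shows "\<exists>c0 c1. \<forall>z s. g z = ereal s \<longrightarrow> c0 + inner c1 z \<le> s"
proof -
  define E where "E = {(x, t::real). g x \<le> ereal t}"
  have cE: "closed E" "convex E" using assms unfolding E_def closed_proper_convex_def closed_fun_def convex_fun_def by auto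
  obtain z0 where z0: "g z0 \<noteq> \<infinity>" using assms unfolding closed_proper_convex_def proper_fun_def by auto
  have "g z0 \<noteq> -\<infinity>" using assms unfolding closed_proper_convex_def proper_fun_def by auto
  then obtain r0 where r0: "g z0 = ereal r0" using z0 by (cases "g z0") auto
  have "(z0, r0 - 1) \<notin> E" using r0 by (simp add: E_def)
  from separating_hyperplane_closed_point[OF cE(2) cE(1) this]
  obtain a b where ab: "inner a (z0, r0 - 1) < b" "\<forall>y\<in>E. inner a y > b" by blast
  obtain a1 a2 where a: "a = (a1, a2)" by (cases a)
  have "(z0, r0) \<in> E" using r0 by (simp add: E_def)
  with ab have "b < inner a1 z0 + a2 * r0" "inner a1 z0 + a2 * (r0 - 1) < b"
    by (auto simp: a inner_Pair)
  then have a2: "a2 > 0" by (simp add: algebra_simps)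
  have "b / a2 + inner (- a1 /\<^sub>R a2) z \<le> s" if "g z = ereal s" for z s
  proof -
    have "(z, s) \<in> E" using that by (simp add: E_def)
    with ab have "b < inner a1 z + a2 * s" by (auto simp: a inner_Pair)
    then have "b - inner a1 z \<le> a2 * s" by simp
    then have "(b - inner a1 z) / a2 \<le> s" using a2 by (simp add: field_simps)
    then show ?thesis by (simp add: diff_divide_distrib divide_inverse algebra_simps)
  qed
  then show ?thesis by blast
qed

lemma prox_exists:
  fixes g :: "'a::euclidean_space \<Rightarrow> ereal"
  assumes cpc: "closed_proper_convex g" and ga: "\<gamma> > 0"
  shows "\<exists>p. \<forall>w. g p + ereal (norm (p - x)^2 / (2*\<gamma>)) \<le> g w + ereal (norm (w - x)^2 / (2*\<gamma>))"
proof -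
  obtain c0 c1 where aff: "\<And>z s. g z = ereal s \<Longrightarrow> c0 + inner c1 z \<le> s"
    using affine_minorant[OF cpc] by blast
  have nm: "g z \<noteq> -\<infinity>" for z using cpc unfolding closed_proper_convex_def proper_fun_def by auto
  define E where "E = {(x, t::real). g x \<le> ereal t}"
  have cE: "closed E" using cpc unfolding E_def closed_proper_convex_def closed_fun_def by auto
  obtain z0 where z0: "g z0 \<noteq> \<infinity>" using cpc unfolding closed_proper_convex_def proper_fun_def by auto
  then obtain r0 where r0: "g z0 = ereal r0" using nm[of z0] by (cases "g z0") auto
  define F where "F = (\<lambda>y::'a \<times> real. snd y + norm (fst y - x)^2 / (2*\<gamma>))"
  define C where "C = r0 + norm (z0 - x)^2 / (2*\<gamma>)"
  define K where "K = E \<inter> {y. F y \<le> C}"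
  have contF: "continuous_on UNIV F" unfolding F_def by (intro continuous_intros) (use ga in auto)
  have "closed {y. F y \<le> C}" by (rule closed_Collect_le[OF contF]) (intro continuous_intros)
  with cE have cK: "closed K" unfolding K_def by blast
  define \<alpha> where "\<alpha> = 1 / (2*\<gamma>)"
  have al: "\<alpha> > 0" using ga by (simp add: \<alpha>_def)
  define K' where "K' = C - c0 - inner c1 x"
  define R where "R = 1 + 2 * norm c1 / \<alpha> + 2 * \<bar>K'\<bar> / \<alpha>"
  define L where "L = c0 - norm c1 * (norm x + R)"
  have sub: "K \<subseteq> cball x R \<times> {L..C}"
  proof
    fix y assume yK: "y \<in> K"
    obtain z t where y: "y = (z, t)" by (cases y)
    from yK have gz: "g z \<le> ereal t" and Ft: "t + norm (z - x)^2 / (2*\<gamma>) \<le> C"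
      by (auto simp: K_def E_def F_def y)
    obtain s where s: "g z = ereal s" using gz nm[of z] by (cases "g z") auto
    have st: "s \<le> t" using gz s by simp
    have lb: "c0 + inner c1 z \<le> t" using aff[OF s] st by simp
    have cs: "- inner c1 (z - x) \<le> norm c1 * norm (z - x)"
      using norm_cauchy_schwarz[of "- c1" "z - x"] by simp
    have "\<alpha> * norm (z - x)^2 \<le> K' + norm c1 * norm (z - x)"
      using Ft lb cs by (simp add: \<alpha>_def K'_def inner_diff_right)
    then have D: "norm (z - x) \<le> R" unfolding R_def by (rule quad_bound[OF al norm_ge_zero norm_ge_zero])
    then have "dist x z \<le> R" by (simp add: dist_norm norm_minus_commute)
    moreover have "norm z \<le> norm x + R" using D norm_triangle_ineq2[of z x] by linarith
    then have "norm c1 * norm z \<le> norm c1 * (norm x + R)" by (simp add: mult_left_mono)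
    then have "L \<le> t" using lb norm_cauchy_schwarz[of "- c1" z] unfolding L_def by simp
    moreover have "t \<le> C" using Ft by (smt (verit) divide_nonneg_pos ga zero_le_power2)
    ultimately show "y \<in> cball x R \<times> {L..C}" by (simp add: y)
  qed
  have "bounded (cball x R \<times> {L..C})" by (intro bounded_Times) auto
  then have "bounded K" using sub by (rule bounded_subset)
  with cK have compK: "compact K" by (simp add: compact_eq_bounded_closed)
  have "(z0, r0) \<in> K" using r0 by (simp add: K_def E_def F_def C_def)
  then have "K \<noteq> {}" by blast
  from continuous_attains_inf[OF compK this continuous_on_subset[OF contF]]
  obtain y0 where y0: "y0 \<in> K" "\<forall>y\<in>K. F y0 \<le> F y" by blast
  obtain p t0 where pt: "y0 = (p, t0)" by (cases y0)
  have gp: "g p \<le> ereal t0" and Fp: "F (p, t0) \<le> C" using y0(1) by (auto simp: pt K_def E_def)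
  have "g p + ereal (norm (p - x)^2 / (2*\<gamma>)) \<le> g w + ereal (norm (w - x)^2 / (2*\<gamma>))" for w
  proof -
    have "g p + ereal (norm (p - x)^2 / (2*\<gamma>)) \<le> ereal (F (p, t0))"
      using add_right_mono[OF gp, of "ereal (norm (p - x)^2 / (2*\<gamma>))"] by (simp add: F_def)
    also have "\<dots> \<le> g w + ereal (norm (w - x)^2 / (2*\<gamma>))"
    proof (cases "g w")
      case (real s)
      show ?thesis
      proof (cases "F (w, s) \<le> C")
        case True
        then have "(w, s) \<in> K" using real by (simp add: K_def E_def)
        then have "F (p, t0) \<le> F (w, s)" using y0(2) pt by auto
        then show ?thesis using real by (simp add: F_def)
      next
        case False
        then show ?thesis using Fp real by (simp add: F_def)
      qed
    qed (use nm in auto)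
    finally show ?thesis .
  qed
  then show ?thesis by blast
qed

lemma moreau:
  fixes g :: "'a::euclidean_space \<Rightarrow> ereal"
  assumes cpc: "closed_proper_convex g" and sg: "\<sigma> > 0"
  shows "prox (conj_fun g) \<sigma> v = v - \<sigma> *\<^sub>R prox g (1/\<sigma>) ((1/\<sigma>) *\<^sub>R v)"
proof -
  define w where "w = (1/\<sigma>) *\<^sub>R v"
  have cv: "convex_fun g" and pr: "proper_fun g" using cpc unfolding closed_proper_convex_def by auto
  have ga: "1/\<sigma> > 0" using sg by simp
  obtain p where mn: "\<forall>z. g p + ereal (norm (p - w)^2 / (2*(1/\<sigma>))) \<le> g z + ereal (norm (z - w)^2 / (2*(1/\<sigma>)))"
    using prox_exists[OF cpc ga] by blast
  have pp: "prox g (1/\<sigma>) w = p" by (rule prox_eq[OF cv pr ga mn])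
  obtain r where r: "g p = ereal r" and sgr: "\<forall>z. ereal (r + inner (w - p) (z - p) / (1/\<sigma>)) \<le> g z"
    using min_subgrad[OF cv pr ga mn] by blast
  define q where "q = v - \<sigma> *\<^sub>R p"
  have qe: "inner (w - p) (z - p) / (1/\<sigma>) = inner q (z - p)" for z
    using sg by (simp add: q_def w_def inner_diff_left algebra_simps)
  have sub: "ereal (r + inner q (z - p)) \<le> g z" for z using sgr qe by simp
  have conjq: "conj_fun g q = ereal (inner q p - r)"
    unfolding conj_fun_def
  proof (rule antisym)
    show "(SUP z. ereal (inner q z) - g z) \<le> ereal (inner q p - r)"
    proof (rule SUP_least)
      fix z
      show "ereal (inner q z) - g z \<le> ereal (inner q p - r)"
      proof (cases "g z")
        case (real s)
        have "r + inner q (z - p) \<le> s" using sub[of z] real by simp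
        then show ?thesis using real by (simp add: inner_diff_right)
      qed (use pr[unfolded proper_fun_def] in auto)
    qed
    show "ereal (inner q p - r) \<le> (SUP z. ereal (inner q z) - g z)"
      by (rule SUP_upper2[where i = p]) (auto simp: r)
  qed
  have conjy: "ereal (inner y p - r) \<le> conj_fun g y" for y
    unfolding conj_fun_def by (rule SUP_upper2[where i = p]) (auto simp: r)
  define F where "F = (\<lambda>y. conj_fun g y + ereal (norm (y - v)^2 / (2*\<sigma>)))"
  define m where "m = inner q p - r + norm (q - v)^2 / (2*\<sigma>)"
  have Fq: "F q = ereal m" by (simp add: F_def m_def conjq)
  have st: "ereal (m + norm (y - q)^2 * (1/(2*\<sigma>))) \<le> F y" for y
  proof -
    have e: "norm (y - v)^2 = norm (y - q)^2 + 2 * inner (y - q) (q - v) + norm (q - v)^2"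
      using norm_expand[of "y - q" 1 "q - v"] by (simp add: algebra_simps)
    have e2: "inner y p - r + norm (y - v)^2 / (2*\<sigma>) = m + norm (y - q)^2 * (1/(2*\<sigma>))"
      unfolding e m_def using sg by (simp add: q_def field_simps inner_diff_left inner_diff_right inner_add_right inner_commute)
    have "ereal (inner y p - r) + ereal (norm (y - v)^2 / (2*\<sigma>)) \<le> F y"
      unfolding F_def by (intro add_right_mono conjy)
    then show ?thesis using e2 by simp
  qed
  have mnq: "\<forall>y. F q \<le> F y"
  proof
    fix y
    have "F q \<le> ereal (m + norm (y - q)^2 * (1/(2*\<sigma>)))" using Fq sg by simp
    then show "F q \<le> F y" using st[of y] by (rule order_trans)
  qed
  have "prox (conj_fun g) \<sigma> v = q" unfolding prox_def
    using the_min_unique[of F q m "1/(2*\<sigma>)", OF mnq Fq] st sg by (simp add: F_def)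
  then show ?thesis using pp by (simp add: q_def w_def)
qed

lemma grad_eq:
  fixes A :: "real^'n^'m"
  assumes "\<sigma> > 0"
  shows "gradx_QP A \<sigma> x u y = transpose A *v (y - \<sigma> *\<^sub>R (u - A *v x))"
proof -
  have "- \<sigma> *\<^sub>R (u - A *v x - (1/\<sigma>) *\<^sub>R y) = y - \<sigma> *\<^sub>R (u - A *v x)"
    using assms by (simp add: algebra_simps)
  then show ?thesis unfolding gradx_QP_def
    by (metis matrix_vector_mult_scaleR)
qed

lemma invariant:
  fixes f :: "real^'n \<Rightarrow> ereal" and g :: "real^'m \<Rightarrow> ereal"
    and A :: "real^'n^'m"
  assumes cpc: "closed_proper_convex g" and sg: "\<sigma> > 0" and u0: "u0 = A *v x0"
  shows "fst (cp_xyy f g A \<tau> \<sigma> x0 y0 k) = fst (ladmp_xuy f g A \<tau> \<sigma> x0 u0 y0 k)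
    \<and> fst (snd (cp_xyy f g A \<tau> \<sigma> x0 y0 k)) = snd (snd (ladmp_xuy f g A \<tau> \<sigma> x0 u0 y0 k))
    \<and> snd (snd (cp_xyy f g A \<tau> \<sigma> x0 y0 k)) = snd (snd (ladmp_xuy f g A \<tau> \<sigma> x0 u0 y0 k))
        - \<sigma> *\<^sub>R (fst (snd (ladmp_xuy f g A \<tau> \<sigma> x0 u0 y0 k)) - A *v fst (ladmp_xuy f g A \<tau> \<sigma> x0 u0 y0 k))"
proof (induction k)
  case 0
  then show ?case using u0 by simp
next
  case (Suc k)
  obtain x y yb where c: "cp_xyy f g A \<tau> \<sigma> x0 y0 k = (x, y, yb)" by (metis prod.exhaust)
  obtain x2 u y2 where l: "ladmp_xuy f g A \<tau> \<sigma> x0 u0 y0 k = (x2, u, y2)" by (metis prod.exhaust)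
  from Suc.IH have e: "x2 = x" "y2 = y" "yb = y - \<sigma> *\<^sub>R (u - A *v x)" by (auto simp: c l)
  define x' where "x' = prox f \<tau> (x - \<tau> *\<^sub>R (yb v* A))"
  define u' where "u' = prox g (1/\<sigma>) ((1/\<sigma>) *\<^sub>R y + A *v x')"
  have gx: "gradx_QP A \<sigma> x u y = yb v* A" using grad_eq[OF sg] e by simp
  have ys: "prox (conj_fun g) \<sigma> (y + \<sigma> *\<^sub>R (A *v x')) = y - \<sigma> *\<^sub>R (u' - A *v x')"
  proof -
    have "(1/\<sigma>) *\<^sub>R (y + \<sigma> *\<^sub>R (A *v x')) = (1/\<sigma>) *\<^sub>R y + A *v x'"
      using sg by (simp add: algebra_simps)
    then show ?thesis using moreau[OF cpc sg, of "y + \<sigma> *\<^sub>R (A *v x')"]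
      by (simp add: u'_def algebra_simps)
  qed
  define y' where "y' = y - \<sigma> *\<^sub>R (u' - A *v x')"
  have cs: "cp_xyy f g A \<tau> \<sigma> x0 y0 (Suc k) = (x', y', 2 *\<^sub>R y' - y)"
    using ys by (simp add: c Let_def x'_def[symmetric] y'_def)
  have ls: "ladmp_xuy f g A \<tau> \<sigma> x0 u0 y0 (Suc k) = (x', u', y')"
    by (simp add: l e(1,2) gx Let_def x'_def[symmetric] u'_def[symmetric] y'_def)
  have "2 *\<^sub>R y' - y = y' - \<sigma> *\<^sub>R (u' - A *v x')"
  proof -
    have "\<And>a c :: real^'m. (a - c) + (a - c) - a = (a - c) - c" by (simp add: algebra_simps)
    then show ?thesis unfolding scaleR_2 y'_def by blast
  qed
  then show ?case unfolding cs ls by simp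
qed

theorem theorem2p3:
  fixes f :: "real^'n \<Rightarrow> ereal" and g :: "real^'m \<Rightarrow> ereal"
    and A :: "real^'n^'m" and \<tau> \<sigma> :: real
    and x0 :: "real^'n" and u0 y0 :: "real^'m"
  assumes "closed_proper_convex f" and "closed_proper_convex g"
    and "\<tau> > 0" and "\<sigma> > 0"
    and "u0 = A *v x0"
  shows "\<forall>k\<ge>1. fst (cp_xyy f g A \<tau> \<sigma> x0 y0 k) = fst (ladmp_xuy f g A \<tau> \<sigma> x0 u0 y0 k)
              \<and> fst (snd (cp_xyy f g A \<tau> \<sigma> x0 y0 k)) = snd (snd (ladmp_xuy f g A \<tau> \<sigma> x0 u0 y0 k))"
  using invariant[OF assms(2) assms(4) assms(5)] by blast

end
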